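(* Let $\mathcal{T}$ be a single-elimination tournament, $\sigma$ a scoring system, $u\in V(\mathcal{T})$, $\mathcal{B}=\{B_1,\dots,B_r\}$ a set of brackets of $\mathcal{T}$, and $\widetilde{B}_i$ the restriction of $B_i$ to $V(\mathcal{T}_u)$. Suppose that: (a) $\{\widetilde{B}_1,\dots,\widetilde{B}_r\}$ is a $\sigma_u$-resolving set for $\mathcal{T}_u$; (b) $B_i(x)\notin P(u)$ for all $i$ and all $x\in M(\mathcal{T})\setminus V(\mathcal{T}_u)$; and (c) for every pair of brackets $B,B'$ of $\mathcal{T}$ with $\mathrm{score}_\sigma(B_i,B)=\mathrm{score}_\sigma(B_i,B')$ for all $i$, we have for all $a\in P(\mathcal{T})\setminus P(u)$ and all $x\in M(\mathcal{T})$ that $B(x)=a$ if and only if $B'(x)=a$. Then $\mathcal{B}$ is a $\sigma$-resolving set for $\mathcal{T}$.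
   Context: A single-elimination tournament is a finite directed graph $\mathcal{T}$ such that: (a) $\mathcal{T}$ has exactly one sink (vertex with no out-neighbours); (b) every non-sink vertex has exactly one out-neighbour; (c) $\mathcal{T}$ has no directed cycles; (d) $|N^-(v)|\ne 1$ for every vertex $v$, where $N^-(v)$ denotes the set of in-neighbours of $v$. The players $P(\mathcal{T})$ are the sources and the matches are $M(\mathcal{T})=V(\mathcal{T})\setminus P(\mathcal{T})$. For a vertex $u$, $P(u)$ is the set of players $a$ for which there is a directed walk from $a$ to $u$ (length $0$ allowed). For $u\in V(\mathcal{T})$, $\mathcal{T}_u$ is the digraph obtained from $\mathcal{T}$ by deleting every vertex $v$ with $P(v)\not\subseteq P(u)$ (it is a single-elimination tournament), and $\sigma_u$ is the restriction of $\sigma$ to $M(\mathcal{T})\cap V(\mathcal{T}_u)=M(\mathcal{T}_u)$. A bracket is a function $B:V(\mathcal{T})\to P(\mathcal{T})$ with $B(a)=a$ for every player $a$ and $B(x)\in\{B(u):u\in N^-(x)\}$ for every match $x$. A scoring system is any function $\sigma:M(\mathcal{T})\to\mathbb{R}_{>0}$. For brackets $B,B'$ let $\mathrm{score}_\sigma(B,B')=\sum_{x\in M(\mathcal{T}):\,B(x)=B'(x)}\sigma(x)$. A set of brackets $\mathcal{B}$ is $\sigma$-resolving if for every pair of distinct brackets $B\ne B'$ there is $B_i\in\mathcal{B}$ with $\mathrm{score}_\sigma(B_i,B)\ne\mathrm{score}_\sigma(B_i,B')$ (and analogously for $\mathcal{T}_u,\sigma_u$). *)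

theory Defs
  imports Complex_Main
begin

definition in_nbrs :: "'a rel \<Rightarrow> 'a \<Rightarrow> 'a set" where
  "in_nbrs E v = {u. (u, v) \<in> E}"

definition out_nbrs :: "'a rel \<Rightarrow> 'a \<Rightarrow> 'a set" where
  "out_nbrs E v = {w. (v, w) \<in> E}"

definition single_elim_tournament :: "'a set \<Rightarrow> 'a rel \<Rightarrow> bool" where
  "single_elim_tournament V E \<longleftrightarrow>
     finite V \<and> E \<subseteq> V \<times> V \<and>
     (\<exists>!s. s \<in> V \<and> out_nbrs E s = {}) \<and>
     (\<forall>v\<in>V. out_nbrs E v \<noteq> {} \<longrightarrow> card (out_nbrs E v) = 1) \<and>
     acyclic E \<and>
     (\<forall>v\<in>V. card (in_nbrs E v) \<noteq> 1)"

definition players :: "'a set \<Rightarrow> 'a rel \<Rightarrow> 'a set" where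
  "players V E = {v\<in>V. in_nbrs E v = {}}"

definition matches :: "'a set \<Rightarrow> 'a rel \<Rightarrow> 'a set" where
  "matches V E = V - players V E"

definition Pl :: "'a set \<Rightarrow> 'a rel \<Rightarrow> 'a \<Rightarrow> 'a set" where
  "Pl V E u = {a \<in> players V E. (a, u) \<in> E\<^sup>*}"

text \<open>Vertex and edge set of the sub-tournament T_u.\<close>
definition subV :: "'a set \<Rightarrow> 'a rel \<Rightarrow> 'a \<Rightarrow> 'a set" where
  "subV V E u = {v \<in> V. Pl V E v \<subseteq> Pl V E u}"

definition subE :: "'a set \<Rightarrow> 'a rel \<Rightarrow> 'a \<Rightarrow> 'a rel" where
  "subE V E u = E \<inter> (subV V E u \<times> subV V E u)"

definition is_bracket :: "'a set \<Rightarrow> 'a rel \<Rightarrow> ('a \<Rightarrow> 'a) \<Rightarrow> bool" where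
  "is_bracket V E B \<longleftrightarrow>
     (\<forall>a \<in> players V E. B a = a) \<and>
     (\<forall>x \<in> matches V E. B x \<in> B ` in_nbrs E x)"

definition scoring_system :: "'a set \<Rightarrow> 'a rel \<Rightarrow> ('a \<Rightarrow> real) \<Rightarrow> bool" where
  "scoring_system V E \<sigma> \<longleftrightarrow> (\<forall>x \<in> matches V E. \<sigma> x > 0)"

definition score :: "'a set \<Rightarrow> 'a rel \<Rightarrow> ('a \<Rightarrow> real) \<Rightarrow> ('a \<Rightarrow> 'a) \<Rightarrow> ('a \<Rightarrow> 'a) \<Rightarrow> real" where
  "score V E \<sigma> B B' = (\<Sum>x \<in> {x \<in> matches V E. B x = B' x}. \<sigma> x)"

text \<open>Brackets are functions on V; two brackets are distinct iff they differ somewhere on V.\<close>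
definition resolving :: "'a set \<Rightarrow> 'a rel \<Rightarrow> ('a \<Rightarrow> real) \<Rightarrow> ('a \<Rightarrow> 'a) set \<Rightarrow> bool" where
  "resolving V E \<sigma> \<B> \<longleftrightarrow>
     (\<forall>Bi \<in> \<B>. is_bracket V E Bi) \<and>
     (\<forall>B B'. is_bracket V E B \<longrightarrow> is_bracket V E B' \<longrightarrow> (\<exists>x\<in>V. B x \<noteq> B' x) \<longrightarrow>
        (\<exists>Bi \<in> \<B>. score V E \<sigma> Bi B \<noteq> score V E \<sigma> Bi B'))"

end

theory Submission
  imports Defs
begin

lemma out_unique:
  assumes T: "single_elim_tournament V E" and "(p,y) \<in> E" "(p,z) \<in> E"
  shows "y = z"
proof -
  have EV: "E \<subseteq> V \<times> V" and od: "\<forall>v\<in>V. out_nbrs E v \<noteq> {} \<longrightarrow> card (out_nbrs E v) = 1"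
    using T unfolding single_elim_tournament_def by auto
  have pV: "p \<in> V" using EV assms(2) by auto
  have "y \<in> out_nbrs E p" "z \<in> out_nbrs E p" using assms by (auto simp: out_nbrs_def)
  moreover then have "card (out_nbrs E p) = 1" using od pV by auto
  ultimately show ?thesis by (metis card_1_singletonE singletonD)
qed

lemma chain:
  assumes T: "single_elim_tournament V E" and "(a,p) \<in> E\<^sup>*" "(a,q) \<in> E\<^sup>*"
  shows "(p,q) \<in> E\<^sup>* \<or> (q,p) \<in> E\<^sup>*"
  using assms(2)
proof (induction rule: rtrancl_induct)
  case base
  then show ?case using assms(3) by auto
next
  case (step p p')
  from step.IH show ?case
  proof
    assume pq: "(p,q) \<in> E\<^sup>*"
    show ?thesis
    proof (cases "p = q")
      case True then show ?thesis using step.hyps by auto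
    next
      case False
      then obtain p'' where "(p,p'') \<in> E" "(p'',q) \<in> E\<^sup>*"
        using pq by (metis converse_rtranclE)
      then show ?thesis using out_unique[OF T step.hyps(2)] by auto
    qed
  next
    assume "(q,p) \<in> E\<^sup>*"
    then show ?thesis using step.hyps by (meson rtrancl.rtrancl_into_rtrancl)
  qed
qed

lemma bracket_Pl:
  assumes T: "single_elim_tournament V E" and B: "is_bracket V E B"
  shows "x \<in> V \<Longrightarrow> B x \<in> Pl V E x"
proof -
  have EV: "E \<subseteq> V \<times> V" and fV: "finite V" and ac: "acyclic E"
    using T unfolding single_elim_tournament_def by auto
  have "finite E" using EV fV by (meson finite_SigmaI finite_subset)
  then have wf: "wf E" using ac by (rule finite_acyclic_wf)
  show "x \<in> V \<Longrightarrow> B x \<in> Pl V E x"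
  proof (induction x rule: wf_induct[OF wf])
    case (1 x)
    show ?case
    proof (cases "x \<in> players V E")
      case True
      then show ?thesis using B by (auto simp: is_bracket_def Pl_def)
    next
      case False
      then have "x \<in> matches V E" using 1 by (auto simp: matches_def)
      then obtain w where w: "(w,x) \<in> E" "B x = B w"
        using B by (auto simp: is_bracket_def in_nbrs_def)
      then have "w \<in> V" using EV by auto
      then have "B w \<in> Pl V E w" using 1 w by auto
      then show ?thesis using w by (auto simp: Pl_def)
    qed
  qed
qed

lemma path_winner:
  assumes T: "single_elim_tournament V E" and B: "is_bracket V E B"
    and "(u,y) \<in> E\<^sup>*"
  shows "B y \<in> Pl V E u \<Longrightarrow> B y = B u"
  using assms(3)
proof (induction rule: rtrancl_induct)
  case base
  then show ?case by simp
next
  case (step y z)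
  have EV: "E \<subseteq> V \<times> V" and ac: "acyclic E"
    using T unfolding single_elim_tournament_def by auto
  have zV: "z \<in> V" using EV step.hyps by auto
  have "z \<in> matches V E" using zV step.hyps(2)
    by (auto simp: matches_def players_def in_nbrs_def)
  then obtain w where w: "(w,z) \<in> E" "B z = B w"
    using B by (auto simp: is_bracket_def in_nbrs_def)
  have "B w \<in> Pl V E w" using bracket_Pl[OF T B] w EV by auto
  then have a1: "(B z, w) \<in> E\<^sup>*" using w by (auto simp: Pl_def)
  have "(B z, u) \<in> E\<^sup>*" using step.prems by (auto simp: Pl_def)
  then have a2: "(B z, y) \<in> E\<^sup>*" using step.hyps(1) by auto
  have "w = y"
  proof (rule ccontr)
    assume ne: "w \<noteq> y"
    from chain[OF T a1 a2] show False
    proof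
      assume "(w,y) \<in> E\<^sup>*"
      then obtain w1 where "(w,w1) \<in> E" "(w1,y) \<in> E\<^sup>*" using ne by (metis converse_rtranclE)
      then have "(z,y) \<in> E\<^sup>*" using out_unique[OF T _ w(1)] by metis
      then have "(z,z) \<in> E\<^sup>+" using step.hyps(2) by auto
      then show False using ac by (auto simp: acyclic_def)
    next
      assume "(y,w) \<in> E\<^sup>*"
      then obtain w1 where "(y,w1) \<in> E" "(w1,w) \<in> E\<^sup>*" using ne by (metis converse_rtranclE)
      then have "(z,w) \<in> E\<^sup>*" using out_unique[OF T _ step.hyps(2)] by metis
      then have "(z,z) \<in> E\<^sup>+" using w(1) by auto
      then show False using ac by (auto simp: acyclic_def)
    qed
  qed
  then have "B y = B z" using w by simp
  then show ?case using step.IH step.prems by simp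
qed

lemma sub_closed:
  assumes T: "single_elim_tournament V E" and "v \<in> subV V E u" "(w,v) \<in> E"
  shows "w \<in> subV V E u"
proof -
  have EV: "E \<subseteq> V \<times> V" using T unfolding single_elim_tournament_def by auto
  have "Pl V E w \<subseteq> Pl V E v" using assms(3) by (auto simp: Pl_def)
  then show ?thesis using assms EV by (auto simp: subV_def)
qed

lemma sub_in_nbrs:
  assumes T: "single_elim_tournament V E" and "v \<in> subV V E u"
  shows "in_nbrs (subE V E u) v = in_nbrs E v"
  using sub_closed[OF T] assms by (auto simp: in_nbrs_def subE_def)

lemma sub_matches:
  assumes T: "single_elim_tournament V E"
  shows "matches (subV V E u) (subE V E u) = matches V E \<inter> subV V E u"
  using sub_in_nbrs[OF T] by (auto simp: matches_def players_def subV_def)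

lemma sub_bracket:
  assumes T: "single_elim_tournament V E" and B: "is_bracket V E B"
  shows "is_bracket (subV V E u) (subE V E u) B"
  using B sub_in_nbrs[OF T] sub_matches[OF T]
  unfolding is_bracket_def players_def by (auto simp: subV_def)

theorem proposition5p4:
  fixes V :: "'a set" and E :: "'a rel" and \<sigma> :: "'a \<Rightarrow> real"
    and u :: 'a and \<B> :: "('a \<Rightarrow> 'a) set"
  assumes T: "single_elim_tournament V E"
    and sig: "scoring_system V E \<sigma>"
    and u: "u \<in> V"
    and fin: "finite \<B>"
    and brackets: "\<forall>Bi \<in> \<B>. is_bracket V E Bi"
    and a: "resolving (subV V E u) (subE V E u) \<sigma> \<B>"
    and b: "\<forall>Bi \<in> \<B>. \<forall>x \<in> matches V E - subV V E u. Bi x \<notin> Pl V E u"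
    and c: "\<forall>B B'. is_bracket V E B \<longrightarrow> is_bracket V E B' \<longrightarrow>
              (\<forall>Bi \<in> \<B>. score V E \<sigma> Bi B = score V E \<sigma> Bi B') \<longrightarrow>
              (\<forall>a \<in> players V E - Pl V E u. \<forall>x \<in> matches V E. B x = a \<longleftrightarrow> B' x = a)"
  shows "resolving V E \<sigma> \<B>"
  unfolding resolving_def
proof (intro conjI allI impI)
  show "\<forall>Bi\<in>\<B>. is_bracket V E Bi" by fact
  fix B B'
  assume B: "is_bracket V E B" and B': "is_bracket V E B'" and ex: "\<exists>x\<in>V. B x \<noteq> B' x"
  show "\<exists>Bi\<in>\<B>. score V E \<sigma> Bi B \<noteq> score V E \<sigma> Bi B'"
  proof (rule ccontr)
    assume "\<not> ?thesis"
    then have eq: "\<forall>Bi\<in>\<B>. score V E \<sigma> Bi B = score V E \<sigma> Bi B'" by auto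
    have cc: "\<And>a x. a \<in> players V E - Pl V E u \<Longrightarrow> x \<in> matches V E \<Longrightarrow> B x = a \<longleftrightarrow> B' x = a"
      using c[rule_format, OF B B'] eq by simp
    have fV: "finite V" using T unfolding single_elim_tournament_def by (rule conjunct1)
    have fM: "finite (matches V E)" using fV by (auto simp: matches_def)
    have sub_eq: "score (subV V E u) (subE V E u) \<sigma> Bi B = score (subV V E u) (subE V E u) \<sigma> Bi B'"
      if Bi: "Bi \<in> \<B>" for Bi
    proof -
      have BiB: "is_bracket V E Bi" using brackets Bi by auto
      have split: "score V E \<sigma> Bi C = score (subV V E u) (subE V E u) \<sigma> Bi C
          + (\<Sum>x\<in>{x \<in> matches V E - subV V E u. Bi x = C x}. \<sigma> x)" for C
      proof -
        have "{x \<in> matches V E. Bi x = C x} = {x \<in> matches V E \<inter> subV V E u. Bi x = C x}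
            \<union> {x \<in> matches V E - subV V E u. Bi x = C x}" by auto
        moreover have "(\<Sum>x\<in>{x \<in> matches V E \<inter> subV V E u. Bi x = C x}
            \<union> {x \<in> matches V E - subV V E u. Bi x = C x}. \<sigma> x) =
          (\<Sum>x\<in>{x \<in> matches V E \<inter> subV V E u. Bi x = C x}. \<sigma> x) +
          (\<Sum>x\<in>{x \<in> matches V E - subV V E u. Bi x = C x}. \<sigma> x)"
          by (rule sum.union_disjoint) (use fM in auto)
        ultimately show ?thesis unfolding score_def sub_matches[OF T] by simp
      qed
      have "{x \<in> matches V E - subV V E u. Bi x = B x} = {x \<in> matches V E - subV V E u. Bi x = B' x}"
      proof (intro Collect_cong conj_cong refl)
        fix x assume x: "x \<in> matches V E - subV V E u"
        then have "Bi x \<in> Pl V E x" using bracket_Pl[OF T BiB] by (auto simp: matches_def)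
        then have "Bi x \<in> players V E - Pl V E u" using b Bi x by (auto simp: Pl_def)
        moreover have "x \<in> matches V E" using x by simp
        ultimately have "(B x = Bi x) = (B' x = Bi x)" by (rule cc)
        then show "(Bi x = B x) = (Bi x = B' x)" by metis
      qed
      then show ?thesis using split[of B] split[of B'] eq Bi by simp
    qed
    have subsame: "\<forall>x\<in>subV V E u. B x = B' x"
    proof (rule ccontr)
      assume "\<not> ?thesis"
      then have ex': "\<exists>x\<in>subV V E u. B x \<noteq> B' x" by blast
      have ar: "\<forall>B B'. is_bracket (subV V E u) (subE V E u) B \<longrightarrow> is_bracket (subV V E u) (subE V E u) B' \<longrightarrow> (\<exists>x\<in>subV V E u. B x \<noteq> B' x) \<longrightarrow>
        (\<exists>Bi \<in> \<B>. score (subV V E u) (subE V E u) \<sigma> Bi B \<noteq> score (subV V E u) (subE V E u) \<sigma> Bi B')"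
        using a unfolding resolving_def by (rule conjunct2)
      have "\<exists>Bi\<in>\<B>. score (subV V E u) (subE V E u) \<sigma> Bi B \<noteq> score (subV V E u) (subE V E u) \<sigma> Bi B'"
        using ar[rule_format, OF sub_bracket[OF T B] sub_bracket[OF T B'] ex'] .
      then show False using sub_eq by auto
    qed
    have uS: "u \<in> subV V E u" using u by (auto simp: subV_def)
    obtain x where x: "x \<in> V" "B x \<noteq> B' x" using ex by auto
    have xS: "x \<notin> subV V E u" using x subsame by auto
    have xM: "x \<in> matches V E"
    proof (rule ccontr)
      assume "x \<notin> matches V E"
      then have "x \<in> players V E" using x(1) by (simp add: matches_def)
      then have "B x = x" "B' x = x" using B B' unfolding is_bracket_def by blast+
      then show False using x(2) by simp
    qed
    have key: "C x = C u" if C: "is_bracket V E C" and oth: "C x \<notin> players V E - Pl V E u" for C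
    proof -
      have CP: "C x \<in> Pl V E x" using bracket_Pl[OF T C x(1)] .
      have CPu: "C x \<in> Pl V E u"
      proof (rule ccontr)
        assume "C x \<notin> Pl V E u"
        then have "C x \<in> players V E - Pl V E u" using CP by (auto simp: Pl_def)
        then show False using oth by blast
      qed
      have "(C x, x) \<in> E\<^sup>*" "(C x, u) \<in> E\<^sup>*" using CP CPu by (auto simp: Pl_def)
      from chain[OF T this] have "(u,x) \<in> E\<^sup>*"
      proof
        assume "(x,u) \<in> E\<^sup>*"
        then have "Pl V E x \<subseteq> Pl V E u" by (auto simp: Pl_def)
        then show ?thesis using xS x by (auto simp: subV_def)
      qed
      then show ?thesis using path_winner[OF T C _ CPu] by simp
    qed
    have "B x \<notin> players V E - Pl V E u"
    proof
      assume "B x \<in> players V E - Pl V E u"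
      from cc[OF this xM] x(2) show False by simp
    qed
    then have "B x = B u" by (rule key[OF B])
    moreover have "B' x \<notin> players V E - Pl V E u"
    proof
      assume "B' x \<in> players V E - Pl V E u"
      from cc[OF this xM] x(2) show False by simp
    qed
    then have "B' x = B' u" by (rule key[OF B'])
    ultimately show False using subsame uS x by simp
  qed
qed

end
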